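(* Let $\mathcal{A}$ be a finite set of alternatives and let $u,w\colon\mathcal{A}\times\mathbb{R}\to\mathbb{R}$ be two quasi-linear utility functions. (1) If both $u$ and $w$ pos-represent the same preference, then there exists a constant $C\in\mathbb{R}$ such that $w(a,z)=u(a,z)+C$ for all $a\in\mathcal{A}$, $z\in\mathbb{R}$. (2) If there exists a constant $C\geqslant 0$ such that $w(a,z)=u(a,z)-C$ for all $a\in\mathcal{A}$, $z\in\mathbb{R}$, then $w$ pos-represents every preference that is pos-represented by $u$.
   Context: A preference is a complete, transitive binary relation $\succcurlyeq$ on $\mathcal{A}\times\mathbb{R}$, where $(a,z)$ means that alternative $a$ is chosen and the agent pays $z$. A function $u\colon\mathcal{A}\times\mathbb{R}\to\mathbb{R}$ pos-represents $\succcurlyeq$ if for all $a,b\in\mathcal{A}$ and $z_a,z_b\in\mathbb{R}$ such that $u(a,z_a)\geqslant 0$ or $u(b,z_b)\geqslant 0$, one has $(a,z_a)\succcurlyeq(b,z_b)\iff u(a,z_a)\geqslant u(b,z_b)$. A utility function $u$ is quasi-linear if $u(a,z)=v(a)-z$ for some function $v\colon\mathcal{A}\to\mathbb{R}$. *)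

theory Defs
  imports Complex_Main
begin

text \<open>A preference on (alternative, payment) pairs: a complete, transitive binary relation.
  The relation is represented as a predicate; R x y means x is weakly preferred to y.\<close>

definition preference :: "('a \<times> real \<Rightarrow> 'a \<times> real \<Rightarrow> bool) \<Rightarrow> bool" where
  "preference R \<longleftrightarrow> (\<forall>x y. R x y \<or> R y x) \<and> (\<forall>x y z. R x y \<longrightarrow> R y z \<longrightarrow> R x z)"

definition pos_represents :: "('a \<times> real \<Rightarrow> real) \<Rightarrow> ('a \<times> real \<Rightarrow> 'a \<times> real \<Rightarrow> bool) \<Rightarrow> bool" where
  "pos_represents u R \<longleftrightarrow>
     (\<forall>a b za zb. u (a, za) \<ge> 0 \<or> u (b, zb) \<ge> 0 \<longrightarrow>
        (R (a, za) (b, zb) \<longleftrightarrow> u (a, za) \<ge> u (b, zb)))"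

definition quasi_linear :: "('a \<times> real \<Rightarrow> real) \<Rightarrow> bool" where
  "quasi_linear u \<longleftrightarrow> (\<exists>v :: 'a \<Rightarrow> real. \<forall>a z. u (a, z) = v a - z)"

end

theory Submission
  imports Defs
begin

theorem claim2:
  fixes u w :: "'a::finite \<times> real \<Rightarrow> real"
  assumes "quasi_linear u" and "quasi_linear w"
  shows "(\<forall>R. preference R \<and> pos_represents u R \<and> pos_represents w R \<longrightarrow>
            (\<exists>C::real. \<forall>a z. w (a, z) = u (a, z) + C))
       \<and> ((\<exists>C::real. C \<ge> 0 \<and> (\<forall>a z. w (a, z) = u (a, z) - C)) \<longrightarrow>
            (\<forall>R. preference R \<and> pos_represents u R \<longrightarrow> pos_represents w R))"
proof (intro conjI allI impI)
  fix R assume H: "preference R \<and> pos_represents u R \<and> pos_represents w R"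
  obtain v where v: "\<And>a z. u (a, z) = v a - z" using assms(1) unfolding quasi_linear_def by blast
  obtain x where x: "\<And>a z. w (a, z) = x a - z" using assms(2) unfolding quasi_linear_def by blast
  have pu: "pos_represents u R" and pw: "pos_represents w R" using H by auto
  have key: "x a - v a = x b - v b" for a b
  proof -
    define t where "t = \<bar>x a - v a\<bar> + \<bar>x b - v b\<bar>"
    have t0: "t \<ge> 0" unfolding t_def by simp
    have ua: "u (a, v a - t) = t" and ub: "u (b, v b - t) = t" using v by auto
    have R1: "R (a, v a - t) (b, v b - t)" and R2: "R (b, v b - t) (a, v a - t)"
      using pu ua ub t0 unfolding pos_represents_def by auto
    have wa: "w (a, v a - t) = x a - v a + t" and wb: "w (b, v b - t) = x b - v b + t"
      using x by auto
    have tt: "-(x a - v a) \<le> t" unfolding t_def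
      using abs_ge_minus_self[of "x a - v a"] abs_ge_zero[of "x b - v b"] by linarith
    have "w (a, v a - t) \<ge> 0" using wa tt by linarith
    hence "w (a, v a - t) \<ge> w (b, v b - t)" "w (b, v b - t) \<ge> w (a, v a - t)"
      using pw R1 R2 unfolding pos_represents_def by blast+
    thus ?thesis using wa wb by linarith
  qed
  show "\<exists>C::real. \<forall>a z. w (a, z) = u (a, z) + C"
  proof (intro exI allI)
    fix a z
    show "w (a, z) = u (a, z) + (x undefined - v undefined)"
      using v[of a z] x[of a z] key[of a undefined] by linarith
  qed
next
  fix R assume C: "\<exists>C::real. C \<ge> 0 \<and> (\<forall>a z. w (a, z) = u (a, z) - C)"
    and H: "preference R \<and> pos_represents u R"
  then obtain C where C0: "C \<ge> 0" and Cw: "\<And>a z. w (a, z) = u (a, z) - C" by blast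
  show "pos_represents w R"
    unfolding pos_represents_def
  proof (intro allI impI)
    fix a b za zb assume "0 \<le> w (a, za) \<or> 0 \<le> w (b, zb)"
    hence "0 \<le> u (a, za) \<or> 0 \<le> u (b, zb)" using Cw C0 by (metis diff_ge_0_iff_ge order_trans)
    thus "R (a, za) (b, zb) = (w (b, zb) \<le> w (a, za))"
      using H Cw unfolding pos_represents_def by auto
  qed
qed

end
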